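(* Let $n>2$ and let $\mathcal{L}\subseteq\mathcal{L}_n$ be a linear subspace that is a Jordan algebra and is invariant under the conjugation action of $S_n$, and suppose $\mathcal{L}$ contains $J$ and contains at least one $S_n$-submodule isomorphic to $\{n-1,1\}$. Then exactly one of the following holds: (1) $\mathrm{EI}_n\subseteq\mathcal{L}$ and $\mathrm{Symm}_n\not\subseteq\mathcal{L}$; (2) $\mathrm{Symm}_n\subseteq\mathcal{L}$ and $\mathrm{EI}_n\not\subseteq\mathcal{L}$; (3) $\mathrm{EI}_n+\mathrm{Symm}_n\subseteq\mathcal{L}$.
   Context: $\mathbf{1}\in\mathbb{R}^n$ is the all-ones column vector; $\mathcal{L}_n=\{Q\in \mathrm{Mat}_n(\mathbb{R}): Q\mathbf{1}=0\}$; $J:=\frac1n\mathbf{1}\mathbf{1}^T-I_n$. $R_i\in\mathcal{L}_n$ has off-diagonal entries in column $i$ equal to $1$, other off-diagonal entries $0$, diagonal fixed by zero row sums; $\mathrm{EI}_n:=\operatorname{span}_{\mathbb{R}}(R_1,\dots,R_n)$. $\mathrm{Symm}_n$ is the space of symmetric matrices in $\mathcal{L}_n$ (equivalently $\operatorname{span}_{\mathbb{R}}(L_{ij}+L_{ji}: i\ne j)$, where $L_{ij}$ has $1$ at $(i,j)$, $-1$ at $(i,i)$, zeros elsewhere). For $\sigma\in S_n$, $K_\sigma$ is the permutation matrix with $e_iK_\sigma=e_{\sigma(i)}$, and $S_n$ acts by $\sigma\cdot X=K_\sigma^TXK_\sigma$. $\{n-1,1\}$ is the irreducible real $S_n$-module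 labelled by the partition $(n-1,1)$ (the standard representation). A Jordan algebra is a subspace closed under $AB+BA$. *)

theory Defs
  imports "HOL-Analysis.Analysis" "HOL-Combinatorics.Permutations"
begin

text \<open>n x n real matrices are indexed by a finite type 'n, with n = CARD('n).\<close>

definition Lspace :: "(real^'n^'n) set" where
  "Lspace = {Q. Q *v (vec 1) = 0}"

definition Jmat :: "real^'n::finite^'n" where
  "Jmat = (\<chi> i j. 1 / real CARD('n) - (if i = j then 1 else 0))"

definition Rmat :: "'n \<Rightarrow> real^'n^'n" where
  "Rmat i = (\<chi> k j. if k = j then (if k = i then 0 else -1) else (if j = i then 1 else 0))"

definition EI :: "(real^'n::finite^'n) set" where
  "EI = span (range Rmat)"

definition Symm :: "(real^'n::finite^'n) set" where
  "Symm = {Q. Q \<in> Lspace \<and> transpose Q = Q}"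

text \<open>Permutation matrix K_sigma with e_i K_sigma = e_{sigma(i)}.\<close>
definition Kmat :: "('n \<Rightarrow> 'n) \<Rightarrow> real^'n^'n" where
  "Kmat \<sigma> = (\<chi> i j. if j = \<sigma> i then 1 else 0)"

definition perm_act :: "('n::finite \<Rightarrow> 'n) \<Rightarrow> real^'n^'n \<Rightarrow> real^'n^'n" where
  "perm_act \<sigma> X = transpose (Kmat \<sigma>) ** X ** Kmat \<sigma>"

text \<open>The standard module {n-1,1}: sum-zero vectors, S_n acting by permutation matrices.\<close>
definition std_module :: "(real^'n::finite) set" where
  "std_module = {v. (\<Sum>i\<in>UNIV. v $ i) = 0}"

definition perm_vec :: "('n::finite \<Rightarrow> 'n) \<Rightarrow> real^'n \<Rightarrow> real^'n" where
  "perm_vec \<sigma> v = transpose (Kmat \<sigma>) *v v"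

definition jordan_algebra :: "(real^'n::finite^'n) set \<Rightarrow> bool" where
  "jordan_algebra L \<longleftrightarrow> subspace L \<and> (\<forall>A\<in>L. \<forall>B\<in>L. A ** B + B ** A \<in> L)"

definition Sn_invariant :: "(real^'n::finite^'n) set \<Rightarrow> bool" where
  "Sn_invariant L \<longleftrightarrow> (\<forall>\<sigma>. \<sigma> permutes (UNIV::'n set) \<longrightarrow> (\<forall>X\<in>L. perm_act \<sigma> X \<in> L))"

definition contains_std_submodule :: "(real^'n::finite^'n) set \<Rightarrow> bool" where
  "contains_std_submodule L \<longleftrightarrow>
     (\<exists>W f. subspace W \<and> W \<subseteq> L \<and> Sn_invariant W \<and> linear f \<and>
        bij_betw f std_module W \<and>
        (\<forall>\<sigma>. \<sigma> permutes (UNIV::'n set) \<longrightarrow>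
           (\<forall>v\<in>std_module. f (perm_vec \<sigma> v) = perm_act \<sigma> (f v))))"

end

theory Submission
  imports Defs
begin


definition E :: "'n \<Rightarrow> 'n \<Rightarrow> real" where "E a i = (if i = a then 1 else 0)"

lemma sum_perm_delta:
  fixes g :: "'n::finite \<Rightarrow> real"
  assumes "\<sigma> permutes UNIV"
  shows "(\<Sum>k\<in>UNIV. (if i = \<sigma> k then 1 else 0) * g k) = g (inv \<sigma> i)"
proof -
  have "\<And>k. (if i = \<sigma> k then 1 else 0) * g k = (if k = inv \<sigma> i then g k else 0)"
  proof -
    fix k
    have "(i = \<sigma> k) = (k = inv \<sigma> i)" using permutes_inv_eq[OF assms, of i k] by auto
    then show "(if i = \<sigma> k then 1 else 0) * g k = (if k = inv \<sigma> i then g k else 0)" by simp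
  qed
  then show ?thesis by simp
qed

lemma sum_perm_delta2:
  fixes g :: "'n::finite \<Rightarrow> real"
  assumes "\<sigma> permutes UNIV"
  shows "(\<Sum>k\<in>UNIV. g k * (if j = \<sigma> k then 1 else 0)) = g (inv \<sigma> j)"
  using sum_perm_delta[OF assms, of j g] by (simp add: mult.commute)

lemma perm_act_entry:
  assumes "\<sigma> permutes UNIV"
  shows "perm_act \<sigma> X $ i $ j = X $ (inv \<sigma> i) $ (inv \<sigma> j)"
proof -
  have "perm_act \<sigma> X $ i $ j = (\<Sum>k\<in>UNIV.
      (\<Sum>l\<in>UNIV. (if i = \<sigma> l then 1 else 0) * X$l$k) * (if j = \<sigma> k then 1 else 0))"
    by (simp add: perm_act_def matrix_matrix_mult_def Kmat_def transpose_def)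
  also have "\<dots> = (\<Sum>k\<in>UNIV. X$(inv \<sigma> i)$k * (if j = \<sigma> k then 1 else 0))"
    by (simp only: sum_perm_delta[OF assms])
  also have "\<dots> = X $ (inv \<sigma> i) $ (inv \<sigma> j)"
    by (rule sum_perm_delta2[OF assms])
  finally show ?thesis .
qed

lemma perm_vec_entry:
  assumes "\<sigma> permutes UNIV"
  shows "perm_vec \<sigma> v $ i = v $ (inv \<sigma> i)"
proof -
  have "perm_vec \<sigma> v $ i = (\<Sum>k\<in>UNIV. (if i = \<sigma> k then 1 else 0) * v$k)"
    by (simp add: perm_vec_def matrix_vector_mult_def Kmat_def transpose_def)
  also have "\<dots> = v $ (inv \<sigma> i)" by (rule sum_perm_delta[OF assms])
  finally show ?thesis .
qed

lemma swap_perm: "Transposition.transpose a b permutes (UNIV::'n set)"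
  by (simp add: permutes_swap_id)

lemma perm_act_swap: "perm_act (Transposition.transpose a b) X $ i $ j
   = X $ (Transposition.transpose a b i) $ (Transposition.transpose a b j)"
  by (simp add: perm_act_entry[OF swap_perm])

lemma perm_vec_swap: "perm_vec (Transposition.transpose a b) v $ i
   = v $ (Transposition.transpose a b i)"
  by (simp add: perm_vec_entry[OF swap_perm])

lemma subsp_scale: "subspace (L::(real^'n^'n) set) \<Longrightarrow> x \<in> L \<Longrightarrow> c *\<^sub>R x \<in> L"
  by (rule subspace_scale)

lemma swap_eq_iff: "(Transposition.transpose x y i = a) = (i = Transposition.transpose x y a)"
  by (auto simp: Transposition.transpose_def)

lemma E_swap: "E a (Transposition.transpose x y i) = E (Transposition.transpose x y a) i"
  by (auto simp: E_def swap_eq_iff)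

lemma swap_inj_eq: "(Transposition.transpose x y i = Transposition.transpose x y j) = (i = j)"
  by (auto simp: Transposition.transpose_def)

definition dv :: "'n \<Rightarrow> 'n \<Rightarrow> real^'n" where "dv a b = (\<chi> i. E a i - E b i)"

lemma sum_E: "(\<Sum>i\<in>(UNIV::'n::finite set). E a i) = 1"
  by (simp add: E_def)

lemma dv_std: "dv a b \<in> (std_module :: (real^'n::finite) set)"
  by (simp add: std_module_def dv_def sum_subtractf sum_E)

lemma perm_vec_swap_dv: "perm_vec (Transposition.transpose x y) (dv a b)
   = dv (Transposition.transpose x y a) (Transposition.transpose x y b)"
  by (simp add: vec_eq_iff perm_vec_swap dv_def E_swap)

lemma dv_add: "dv a b = dv a c + dv c b"
  by (simp add: vec_eq_iff dv_def)

lemma dv_neg: "dv b a = - dv a b"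
  by (simp add: vec_eq_iff dv_def)

lemma dv_nz: "a \<noteq> b \<Longrightarrow> dv a b \<noteq> 0"
proof
  assume "a \<noteq> b" "dv a b = 0"
  then have "dv a b $ a = 0" by simp
  with \<open>a \<noteq> b\<close> show False by (simp add: dv_def E_def)
qed

lemma Rmat_E: "Rmat i = (\<chi> k j. E i j - (if k = j then 1 else 0))"
  by (simp add: vec_eq_iff Rmat_def E_def)

lemma perm_act_swap_R: "perm_act (Transposition.transpose x y) (Rmat i)
   = Rmat (Transposition.transpose x y i)"
  unfolding Rmat_E by (simp add: vec_eq_iff perm_act_swap swap_inj_eq E_swap)

definition Ym :: "'n \<Rightarrow> 'n \<Rightarrow> real^'n::finite^'n" where
  "Ym a b = (\<chi> i j. (E a i - E b i) + (E a j - E b j)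
      - real CARD('n) * (if i = j then E a i - E b i else 0))"

definition Tm :: "'n \<Rightarrow> 'n \<Rightarrow> real^'n::finite^'n" where
  "Tm a b = (\<chi> i j. - ((E a i - E b i) * (E a j - E b j)))"

lemma perm_act_swap_Y: "perm_act (Transposition.transpose x y) (Ym a b)
   = Ym (Transposition.transpose x y a) (Transposition.transpose x y b)"
  by (simp add: vec_eq_iff perm_act_swap Ym_def swap_inj_eq E_swap)

lemma Ym_diff: "Ym a b = Ym a c - Ym b c"
  by (simp add: vec_eq_iff Ym_def algebra_simps)

lemma Ym_same: "Ym a a = 0"
  by (simp add: vec_eq_iff Ym_def)

lemma Lspace_rowsum: "X \<in> Lspace \<Longrightarrow> (\<Sum>j\<in>UNIV. X$i$j) = 0"
proof -
  assume "X \<in> Lspace"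
  then have "(X *v vec 1) $ i = 0" by (simp add: Lspace_def)
  then show ?thesis by (simp add: matrix_vector_mult_def)
qed

lemma colsum_in:
  fixes L :: "(real^'n::finite^'n) set"
  assumes "L \<subseteq> Lspace" "jordan_algebra L" "Jmat \<in> L" "X \<in> L"
  shows "(\<chi> i j. \<Sum>k\<in>UNIV. X$k$j) \<in> L"
proof -
  have sub: "subspace L" using assms(2) jordan_algebra_def by blast
  have jx: "Jmat ** X + X ** Jmat \<in> L" using assms(2-4) jordan_algebra_def by blast
  define n where "n = real CARD('n)"
  have n0: "n \<noteq> 0" by (simp add: n_def)
  have rs: "\<And>i. (\<Sum>j\<in>UNIV. X$i$j) = 0" using assms(1,4) Lspace_rowsum by blast
  have "Jmat ** X + X ** Jmat = (\<chi> i j. (1/n) * (\<Sum>k\<in>UNIV. X$k$j) - 2 * X$i$j)"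
  proof -
    have jm: "\<And>i j. (Jmat::real^'n^'n) $ i $ j = 1/n - (if i = j then 1 else 0)"
      by (simp add: Jmat_def n_def)
    have "\<And>i j. (Jmat ** X) $ i $ j = (1/n) * (\<Sum>k\<in>UNIV. X$k$j) - X$i$j"
    proof -
      fix i j
      have "(Jmat ** X) $ i $ j = (\<Sum>k\<in>UNIV. (1/n) * X$k$j - (if k = i then X$k$j else 0))"
        unfolding matrix_matrix_mult_def jm by (auto intro!: sum.cong simp: algebra_simps)
      also have "\<dots> = (1/n) * (\<Sum>k\<in>UNIV. X$k$j) - X$i$j"
        by (simp add: sum_subtractf sum_distrib_left)
      finally show "(Jmat ** X) $ i $ j = (1/n) * (\<Sum>k\<in>UNIV. X$k$j) - X$i$j" .
    qed
    moreover have "\<And>i j. (X ** Jmat) $ i $ j = - X$i$j"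
    proof -
      fix i j
      have "(X ** Jmat) $ i $ j = (\<Sum>k\<in>UNIV. (1/n) * X$i$k - (if k = j then X$i$k else 0))"
        unfolding matrix_matrix_mult_def jm by (auto intro!: sum.cong simp: algebra_simps)
      also have "\<dots> = (1/n) * (\<Sum>k\<in>UNIV. X$i$k) - X$i$j"
        by (simp add: sum_subtractf sum_distrib_left)
      finally show "(X ** Jmat) $ i $ j = - X$i$j" using rs by simp
    qed
    ultimately show ?thesis by (simp add: vec_eq_iff)
  qed
  then have "(\<chi> i j. \<Sum>k\<in>UNIV. X$k$j) = n *\<^sub>R (Jmat ** X + X ** Jmat) + (2*n) *\<^sub>R X"
  proof -
    { fix i j
      have "(Jmat ** X + X ** Jmat) $ i $ j = (1/n) * (\<Sum>k\<in>UNIV. X$k$j) - 2 * X$i$j"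
        using \<open>Jmat ** X + X ** Jmat = _\<close> by simp
      then have "(\<Sum>k\<in>UNIV. X$k$j) = n * (Jmat ** X + X ** Jmat) $ i $ j + 2*n * X$i$j"
        using n0 by (simp add: field_simps)
    }
    then show ?thesis by (simp add: vec_eq_iff)
  qed
  then show ?thesis using sub jx assms(4)
    by (simp add: subspace_add subspace_scale)
qed



lemma perm_act_swap_diff: "perm_act (Transposition.transpose x y) (A - B)
   = perm_act (Transposition.transpose x y) A - perm_act (Transposition.transpose x y) B"
  by (simp add: vec_eq_iff perm_act_swap)

lemma sum_Rmat: "(\<Sum>j\<in>UNIV. Rmat j) = real CARD('n) *\<^sub>R (Jmat :: real^'n::finite^'n)"
proof -
  { fix k l :: 'n
    have "(\<Sum>j\<in>UNIV. Rmat j) $ k $ l = (\<Sum>j\<in>UNIV. E j l - (if k = l then 1 else 0))"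
      by (simp add: sum_component Rmat_E)
    also have "\<dots> = 1 - real CARD('n) * (if k = l then 1 else 0)"
      by (simp add: sum_subtractf E_def)
    also have "\<dots> = (real CARD('n) *\<^sub>R (Jmat :: real^'n::finite^'n)) $ k $ l"
      by (simp add: Jmat_def right_diff_distrib)
    finally have "(\<Sum>j\<in>UNIV. Rmat j) $ k $ l = (real CARD('n) *\<^sub>R (Jmat :: real^'n::finite^'n)) $ k $ l" .
  }
  then show ?thesis by (simp add: vec_eq_iff)
qed

lemma EI_part:
  fixes L :: "(real^'n::finite^'n) set"
  assumes sub: "subspace L" and inv: "Sn_invariant L" and J: "Jmat \<in> L"
    and ab: "a \<noteq> b" and R: "Rmat a - Rmat b \<in> L"
  shows "EI \<subseteq> L"
proof -
  have Rb: "Rmat x - Rmat b \<in> L" for x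
  proof (cases "x = b")
    case True then show ?thesis using sub by (simp add: subspace_0)
  next
    case False
    show ?thesis
    proof (cases "x = a")
      case True then show ?thesis using R by simp
    next
      case xa: False
      have "perm_act (Transposition.transpose a x) (Rmat a - Rmat b) \<in> L"
        using inv R swap_perm[of a x] unfolding Sn_invariant_def by (metis (no_types))
      moreover have "perm_act (Transposition.transpose a x) (Rmat a - Rmat b) = Rmat x - Rmat b"
        using False ab by (simp add: perm_act_swap_diff perm_act_swap_R)
      ultimately show ?thesis by simp
    qed
  qed
  have Rxy: "Rmat x - Rmat y \<in> L" for x y
  proof -
    have "Rmat x - Rmat y = (Rmat x - Rmat b) - (Rmat y - Rmat b)" by simp
    then show ?thesis using subspace_diff[OF sub Rb[of x] Rb[of y]] by simp
  qed
  have Ri: "Rmat i \<in> L" for i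
  proof -
    define n where "n = real CARD('n)"
    have n0: "n \<noteq> 0" by (simp add: n_def)
    have "(\<Sum>j\<in>UNIV. Rmat i - Rmat j) = n *\<^sub>R Rmat i - n *\<^sub>R Jmat"
      by (simp add: sum_subtractf sum_Rmat n_def sum_constant_scaleR del: sum_constant)
    then have "Rmat i = (1/n) *\<^sub>R ((\<Sum>j\<in>UNIV. Rmat i - Rmat j) + n *\<^sub>R Jmat)"
      using n0 by simp
    moreover have "(\<Sum>j\<in>UNIV. Rmat i - Rmat j) \<in> L"
      using Rxy sub by (simp add: subspace_sum)
    ultimately show ?thesis using sub J by (metis subspace_add subspace_scale)
  qed
  show ?thesis unfolding EI_def
    by (rule span_minimal) (use Ri sub in auto)
qed



lemma prod_sum_gen:
  fixes d :: "'n::finite \<Rightarrow> real" and n :: real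
  assumes s0: "(\<Sum>k\<in>UNIV. d k) = 0" and s2: "(\<Sum>k\<in>UNIV. d k * d k) = s"
    and nc: "n = real CARD('n)"
  shows "(\<Sum>k\<in>UNIV. (d i + d k - n*(if i = k then d i else 0)) * (d k + d j - n*(if k = j then d k else 0)))
     = s - n*(d j*d j) - n*(d i*d i) - n*(d i*d j) + n*n*(if i = j then d i*d i else 0)"
proof -
  have pt: "\<And>k. (d i + d k - n*(if i = k then d i else 0)) * (d k + d j - n*(if k = j then d k else 0))
     = d i * d k + d i * d j + d k * d k + d k * d j
       - (if k = j then n * (d i * d k + d k * d k) else 0)
       - (if k = i then n * (d i * d k + d i * d j) else 0)
       + (if k = i then (if i = j then n * n * (d i * d i) else 0) else 0)"
    by (auto simp: algebra_simps)
  have "(\<Sum>k\<in>UNIV. (d i + d k - n*(if i = k then d i else 0)) * (d k + d j - n*(if k = j then d k else 0)))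
      = d i * (\<Sum>k\<in>UNIV. d k) + n * (d i * d j) + (\<Sum>k\<in>UNIV. d k * d k) + (\<Sum>k\<in>UNIV. d k) * d j
        - n * (d i * d j + d j * d j) - n * (d i * d i + d i * d j)
        + n * n * (if i = j then d i * d i else 0)"
    unfolding pt
    by (simp add: sum.distrib sum_subtractf sum_distrib_left[symmetric] sum_distrib_right[symmetric] nc)
  then show ?thesis using s0 s2 by (simp add: algebra_simps)
qed

lemma sum_E': "(\<Sum>z\<in>(UNIV::'n::finite set). E z i) = 1"
  by (simp add: E_def)

lemma Ysq_entry:
  fixes x y :: "'n::finite"
  assumes xy: "x \<noteq> y"
  shows "(Ym x y ** Ym x y) $ i $ j =
    (let d = (\<lambda>k. E x k - E y k); n = real CARD('n) in
     2 - n*(d j*d j) - n*(d i*d i) - n*(d i*d j) + n*n*(if i = j then d i*d i else 0))"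
proof -
  define d where "d = (\<lambda>k. E x k - E y k)"
  have s0: "(\<Sum>k\<in>UNIV. d k) = 0" by (simp add: d_def sum_subtractf sum_E)
  have "\<And>k. d k * d k = E x k + E y k" using xy by (auto simp: d_def E_def)
  then have s2: "(\<Sum>k\<in>UNIV. d k * d k) = 2" by (simp add: sum.distrib sum_E)
  have "(Ym x y ** Ym x y) $ i $ j = (\<Sum>k\<in>UNIV. (d i + d k - real CARD('n)*(if i = k then d i else 0))
       * (d k + d j - real CARD('n)*(if k = j then d k else 0)))"
    unfolding matrix_matrix_mult_def Ym_def d_def by simp
  also have "\<dots> = 2 - real CARD('n)*(d j*d j) - real CARD('n)*(d i*d i) - real CARD('n)*(d i*d j)
      + real CARD('n)*real CARD('n)*(if i = j then d i*d i else 0)"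
    by (rule prod_sum_gen[OF s0 s2 refl])
  finally show ?thesis by (simp add: d_def Let_def)
qed

lemma sumY_entry:
  fixes x :: "'n::finite"
  shows "(\<Sum>z\<in>UNIV. Ym x z) $ i $ j = (real CARD('n) * E x i - 1) + (real CARD('n) * E x j - 1)
     - real CARD('n) * (if i = j then real CARD('n) * E x i - 1 else 0)"
  by (simp add: sum_component Ym_def sum.distrib sum_subtractf sum_E' sum_distrib_left[symmetric])

lemma sumY_entry':
  fixes x :: "'n::finite"
  shows "(\<Sum>z\<in>UNIV. Ym x z $ i $ j) = (real CARD('n) * E x i - 1) + (real CARD('n) * E x j - 1)
     - real CARD('n) * (if i = j then real CARD('n) * E x i - 1 else 0)"
  using sumY_entry[of x i j] by (simp add: sum_component)

lemma T_ident:
  fixes x y :: "'n::finite"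
  assumes xy: "x \<noteq> y"
  shows "Tm x y = (1/real CARD('n)) *\<^sub>R (Ym x y ** Ym x y) + 2 *\<^sub>R Jmat
     + (1/real CARD('n)) *\<^sub>R ((\<Sum>z\<in>UNIV. Ym x z) + (\<Sum>z\<in>UNIV. Ym y z))"
proof -
  { fix i j :: 'n
    define n where "n = real CARD('n)"
    have n0: "n \<noteq> 0" by (simp add: n_def)
    have "((1/n) *\<^sub>R (Ym x y ** Ym x y) + 2 *\<^sub>R (Jmat::real^'n^'n)
     + (1/n) *\<^sub>R ((\<Sum>z\<in>UNIV. Ym x z) + (\<Sum>z\<in>UNIV. Ym y z))) $ i $ j
      = (1/n) * (2 - n*((E x j - E y j)*(E x j - E y j)) - n*((E x i - E y i)*(E x i - E y i))
           - n*((E x i - E y i)*(E x j - E y j)) + n*n*(if i = j then (E x i - E y i)*(E x i - E y i) else 0))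
        + 2 * (1/n - (if i = j then 1 else 0))
        + (1/n) * ((n * E x i - 1) + (n * E x j - 1) - n * (if i = j then n * E x i - 1 else 0)
                 + (n * E y i - 1) + (n * E y j - 1) - n * (if i = j then n * E y i - 1 else 0))"
      using xy by (simp add: Ysq_entry sumY_entry' Jmat_def n_def Let_def)
    also have "\<dots> = Tm x y $ i $ j"
      using xy n0 by (auto simp: Tm_def E_def field_simps)
    finally have "Tm x y $ i $ j = ((1/n) *\<^sub>R (Ym x y ** Ym x y) + 2 *\<^sub>R (Jmat::real^'n^'n)
     + (1/n) *\<^sub>R ((\<Sum>z\<in>UNIV. Ym x z) + (\<Sum>z\<in>UNIV. Ym y z))) $ i $ j" by simp
    then have "Tm x y $ i $ j = ((1/real CARD('n)) *\<^sub>R (Ym x y ** Ym x y) + 2 *\<^sub>R (Jmat::real^'n^'n)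
     + (1/real CARD('n)) *\<^sub>R ((\<Sum>z\<in>UNIV. Ym x z) + (\<Sum>z\<in>UNIV. Ym y z))) $ i $ j"
      by (simp add: n_def)
  }
  then show ?thesis by (simp add: vec_eq_iff)
qed



lemma s1: "(\<Sum>i\<in>UNIV. \<Sum>j\<in>UNIV. (Q::real^'n::finite^'n)$i$j * (E i k * E i l)) = (if k = l then (\<Sum>j\<in>UNIV. Q$k$j) else 0)"
proof -
  have "\<And>i j. Q$i$j * (E i k * E i l) = (if i = k then (if k = l then Q$i$j else 0) else 0)"
    by (simp add: E_def)
  then have "(\<Sum>i\<in>UNIV. \<Sum>j\<in>UNIV. Q$i$j * (E i k * E i l)) = (\<Sum>j\<in>UNIV. \<Sum>i\<in>UNIV. (if i = k then (if k = l then Q$i$j else 0) else 0))"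
    by (simp add: sum.swap[of _ UNIV UNIV])
  also have "\<dots> = (\<Sum>j\<in>UNIV. (if k = l then Q$k$j else 0))" by simp
  finally show ?thesis by auto
qed

lemma s2: "(\<Sum>i\<in>UNIV. \<Sum>j\<in>UNIV. (Q::real^'n::finite^'n)$i$j * (E i k * E j l)) = Q$k$l"
proof -
  have "\<And>i j. Q$i$j * (E i k * E j l) = (if j = l then (if i = k then Q$i$j else 0) else 0)"
    by (simp add: E_def)
  then show ?thesis by simp
qed

lemma s3: "(\<Sum>i\<in>UNIV. \<Sum>j\<in>UNIV. (Q::real^'n::finite^'n)$i$j * (E j k * E i l)) = Q$l$k"
proof -
  have "\<And>i j. Q$i$j * (E j k * E i l) = (if j = k then (if i = l then Q$i$j else 0) else 0)"
    by (simp add: E_def)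
  then show ?thesis by simp
qed

lemma s4: "(\<Sum>i\<in>UNIV. \<Sum>j\<in>UNIV. (Q::real^'n::finite^'n)$i$j * (E j k * E j l)) = (if k = l then (\<Sum>i\<in>UNIV. Q$i$k) else 0)"
proof -
  have "\<And>i j. Q$i$j * (E j k * E j l) = (if j = k then (if k = l then Q$i$j else 0) else 0)"
    by (simp add: E_def)
  then have "(\<Sum>i\<in>UNIV. \<Sum>j\<in>UNIV. Q$i$j * (E j k * E j l)) = (\<Sum>i\<in>UNIV. (if k = l then Q$i$k else 0))"
    by simp
  then show ?thesis by auto
qed

lemma symm_decomp:
  assumes "Q \<in> Symm"
  shows "Q = (\<Sum>i\<in>UNIV. \<Sum>j\<in>UNIV. (Q$i$j/2) *\<^sub>R Tm i j)"
proof -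
  have QL: "Q \<in> Lspace" and QT: "transpose Q = Q" using assms by (auto simp: Symm_def)
  have Qsym: "Q$l$k = Q$k$l" for k l
  proof -
    have "transpose Q $ k $ l = Q $ k $ l" using QT by simp
    then show ?thesis by (simp add: transpose_def)
  qed
  have rs: "\<And>k. (\<Sum>j\<in>UNIV. Q$k$j) = 0" using QL Lspace_rowsum by blast
  have cs: "(\<Sum>i\<in>UNIV. Q$i$k) = 0" for k
  proof -
    have "(\<Sum>i\<in>UNIV. Q$i$k) = (\<Sum>i\<in>UNIV. Q$k$i)" by (rule sum.cong) (auto intro: Qsym)
    then show ?thesis using rs by simp
  qed
  { fix k l
    have pt: "\<And>i j. (Q$i$j/2) * (- ((E i k - E j k) * (E i l - E j l)))
        = (1/2) * (Q$i$j * (E i k * E j l)) + (1/2) * (Q$i$j * (E j k * E i l))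
          - (1/2) * (Q$i$j * (E i k * E i l)) - (1/2) * (Q$i$j * (E j k * E j l))"
      by (simp add: algebra_simps)
    have "(\<Sum>i\<in>UNIV. \<Sum>j\<in>UNIV. (Q$i$j/2) *\<^sub>R Tm i j) $ k $ l
        = (\<Sum>i\<in>UNIV. \<Sum>j\<in>UNIV. (Q$i$j/2) * (- ((E i k - E j k) * (E i l - E j l))))"
      by (simp add: sum_component Tm_def)
    also have "\<dots> = (1/2) * Q$k$l + (1/2) * Q$l$k
          - (1/2) * (if k = l then (\<Sum>j\<in>UNIV. Q$k$j) else 0)
          - (1/2) * (if k = l then (\<Sum>i\<in>UNIV. Q$i$k) else 0)"
      unfolding pt
      by (simp only: sum.distrib sum_subtractf sum_distrib_left[symmetric] s1 s2 s3 s4)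
    also have "\<dots> = Q$k$l" using rs[of k] cs[of k] Qsym[of k l] by (cases "k = l") simp_all
    finally have "Q$k$l = (\<Sum>i\<in>UNIV. \<Sum>j\<in>UNIV. (Q$i$j/2) *\<^sub>R Tm i j) $ k $ l" by (rule HOL.sym)
  }
  then show ?thesis unfolding vec_eq_iff by blast
qed



lemma Sym_part:
  fixes L :: "(real^'n::finite^'n) set"
  assumes jor: "jordan_algebra L" and inv: "Sn_invariant L" and J: "Jmat \<in> L"
    and ab: "a \<noteq> b" and Y: "Ym a b \<in> L"
  shows "Symm \<subseteq> L"
proof -
  have sub: "subspace L" using jor jordan_algebra_def by blast
  have Yb: "Ym x b \<in> L" for x
  proof (cases "x = b")
    case True then show ?thesis using sub by (simp add: subspace_0 Ym_same)
  next
    case False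
    show ?thesis
    proof (cases "x = a")
      case True then show ?thesis using Y by simp
    next
      case xa: False
      have "perm_act (Transposition.transpose a x) (Ym a b) \<in> L"
        using inv Y swap_perm[of a x] unfolding Sn_invariant_def by (metis (no_types))
      moreover have "perm_act (Transposition.transpose a x) (Ym a b) = Ym x b"
        using False ab by (simp add: perm_act_swap_Y)
      ultimately show ?thesis by simp
    qed
  qed
  have Yxy: "Ym x y \<in> L" for x y
    using subspace_diff[OF sub Yb[of x] Yb[of y]] Ym_diff[of x y b] by simp
  have YY: "Ym x y ** Ym x y \<in> L" for x y
  proof -
    have "Ym x y ** Ym x y + Ym x y ** Ym x y \<in> L" using jor Yxy unfolding jordan_algebra_def by blast
    then have "(1/2) *\<^sub>R (Ym x y ** Ym x y + Ym x y ** Ym x y) \<in> L" by (rule subspace_scale[OF sub])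
    moreover have "(1/2::real) *\<^sub>R (Ym x y ** Ym x y + Ym x y ** Ym x y) = Ym x y ** Ym x y"
      by (simp only: scaleR_right_distrib scaleR_left_distrib[symmetric]) simp
    ultimately show ?thesis by simp
  qed
  have T: "Tm x y \<in> L" for x y
  proof (cases "x = y")
    case True
    then have "Tm x y = 0" by (simp add: vec_eq_iff Tm_def)
    then show ?thesis using sub by (simp add: subspace_0)
  next
    case False
    have s1: "(\<Sum>z\<in>UNIV. Ym x z) \<in> L" "(\<Sum>z\<in>UNIV. Ym y z) \<in> L"
      using Yxy sub by (simp_all add: subspace_sum)
    show ?thesis unfolding T_ident[OF False]
      using sub YY[of x y] J s1
      by (intro subspace_add subspace_scale) auto
  qed
  show ?thesis
  proof
    fix Q :: "real^'n^'n" assume Q: "Q \<in> Symm"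
    have "(\<Sum>i\<in>UNIV. \<Sum>j\<in>UNIV. (Q$i$j/2) *\<^sub>R Tm i j) \<in> L"
      using sub T by (intro subspace_sum subspace_scale) auto
    then show "Q \<in> L" using symm_decomp[OF Q] by simp
  qed
qed



lemma swap_other' [simp]: "a \<noteq> x \<Longrightarrow> b \<noteq> x \<Longrightarrow> Transposition.transpose a b x = x"
  by (simp add: Transposition.transpose_def)

lemma sum_split3:
  fixes g :: "'n::finite \<Rightarrow> real"
  assumes "a \<noteq> b"
  shows "(\<Sum>j\<in>UNIV. g j) = g a + g b + (\<Sum>j\<in>UNIV - {a,b}. g j)"
proof -
  have "UNIV = insert a (insert b (UNIV - {a,b}))" by auto
  then have "(\<Sum>j\<in>UNIV. g j) = (\<Sum>j\<in>insert a (insert b (UNIV - {a,b})). g j)" by simp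
  also have "\<dots> = g a + g b + (\<Sum>j\<in>UNIV - {a,b}. g j)" using assms by simp
  finally show ?thesis .
qed

lemma card_O: "(a::'n::finite) \<noteq> b \<Longrightarrow> real (card (UNIV - {a,b})) = real CARD('n) - 2"
proof -
  assume ab: "a \<noteq> b"
  have "card (UNIV - {a,b}) = CARD('n) - card {a,b}" by (rule card_Diff_subset) auto
  moreover have "card {a,b} = 2" using ab by simp
  moreover have "CARD('n) \<ge> card {a,b}" by (rule card_mono) auto
  ultimately show ?thesis by simp
qed

lemma key:
  fixes L :: "(real^'n::finite^'n) set"
  assumes card: "CARD('n) > 2"
    and LL: "L \<subseteq> Lspace"
    and jor: "jordan_algebra L"
    and inv: "Sn_invariant L"
    and J: "Jmat \<in> L"
    and std: "contains_std_submodule L"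
  shows "EI \<subseteq> L \<or> Symm \<subseteq> L"
proof -
  have sub: "subspace L" using jor jordan_algebra_def by blast
  obtain a :: 'n where True by blast
  have "card (UNIV - {a}) > 1" using card by (simp add: card_Diff_singleton)
  then have "UNIV - {a} \<noteq> {}" by (metis card.empty not_less_zero less_zeroE gr_implies_not0)
  then obtain b where b: "b \<in> UNIV - {a}" by blast
  have "card (UNIV - {a,b}) > 0" using card_O[of a b] b card by simp
  then have "UNIV - {a,b} \<noteq> {}" by (metis card.empty less_irrefl)
  then obtain c where c: "c \<in> UNIV - {a,b}" by blast
  have ab: "a \<noteq> b" and ac: "a \<noteq> c" and bc: "b \<noteq> c" using b c by auto
  obtain W f where W: "subspace W" "W \<subseteq> L" and lin: "linear f"
    and bij: "bij_betw f std_module W"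
    and eqv: "\<And>\<sigma> v. \<sigma> permutes (UNIV::'n set) \<Longrightarrow> v \<in> std_module \<Longrightarrow> f (perm_vec \<sigma> v) = perm_act \<sigma> (f v)"
    using std unfolding contains_std_submodule_def by blast
  have fL: "f (dv x y) \<in> L" for x y
    using bij_betw_apply[OF bij dv_std[of x y]] W(2) by blast
  define X where "X = f (dv a b)"
  have XL: "X \<in> L" using fL X_def by simp
  have eqs: "perm_act (Transposition.transpose x y) X
      = f (dv (Transposition.transpose x y a) (Transposition.transpose x y b))" for x y
    using eqv[OF swap_perm dv_std, of x y a b] unfolding X_def perm_vec_swap_dv by simp
  define s where "s = Transposition.transpose a b"
  have F1: "X $ (s i) $ (s j) = - X $ i $ j" for i j
  proof -
    have "perm_act s X = f (dv b a)" using eqs[of a b] by (simp add: s_def)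
    also have "\<dots> = - X" unfolding X_def dv_neg[of b a] by (rule linear_neg[OF lin])
    finally have "perm_act s X $ i $ j = (- X) $ i $ j" by simp
    then show ?thesis by (simp add: perm_act_swap s_def)
  qed
  have rs: "(\<Sum>j\<in>UNIV. X$i$j) = 0" for i using XL LL Lspace_rowsum by blast
  define lam where "lam = (\<Sum>k\<in>UNIV. X$k$a)"
  have sperm: "s permutes UNIV" by (simp add: s_def swap_perm)
  have cs_perm: "(\<Sum>k\<in>UNIV. X$k$j) = (\<Sum>k\<in>UNIV. X$(s k)$j)" for j
    using sum.permute[OF sperm, of "\<lambda>k. X$k$j"] by (simp add: comp_def)
  have colsum: "(\<Sum>k\<in>UNIV. X$k$j) = lam * (E a j - E b j)" for j
  proof -
    consider "j = a" | "j = b" | "j \<noteq> a" "j \<noteq> b" by blast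
    then show ?thesis
    proof cases
      case 1 then show ?thesis using ab by (simp add: lam_def E_def)
    next
      case 2
      have "(\<Sum>k\<in>UNIV. X$k$j) = (\<Sum>k\<in>UNIV. X$(s k)$(s a))" using cs_perm 2 by (simp add: s_def)
      also have "\<dots> = - lam" by (simp add: F1 lam_def sum_negf)
      finally show ?thesis using 2 ab by (simp add: E_def)
    next
      case 3
      have "(\<Sum>k\<in>UNIV. X$k$j) = (\<Sum>k\<in>UNIV. X$(s k)$(s j))" using cs_perm 3 by (simp add: s_def)
      also have "\<dots> = - (\<Sum>k\<in>UNIV. X$k$j)" by (simp add: F1 sum_negf)
      finally show ?thesis using 3 by (simp add: E_def)
    qed
  qed
  have hML: "(\<chi> i j. \<Sum>k\<in>UNIV. X$k$j) \<in> L" by (rule colsum_in[OF LL jor J XL])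
  have Meq: "(\<chi> i j. \<Sum>k\<in>UNIV. X$k$j) = lam *\<^sub>R (Rmat a - Rmat b)"
    by (simp add: vec_eq_iff colsum Rmat_E)
  show ?thesis
  proof (cases "lam = 0")
    case False
    have "(1/lam) *\<^sub>R (\<chi> i j. \<Sum>k\<in>UNIV. X$k$j) \<in> L" by (rule subspace_scale[OF sub hML])
    then have "Rmat a - Rmat b \<in> L" using False by (simp add: Meq)
    then show ?thesis using EI_part[OF sub inv J ab] by blast
  next
    case True
    define n where "n = real CARD('n)"
    define Oo where "Oo = UNIV - {a,b}"
    have cO: "real (card Oo) = n - 2" using card_O[OF ab] by (simp add: Oo_def n_def)
    define p where "p = X$a$b"
    define q where "q = X$a$c"
    define r where "r = X$c$a"
    have sa: "s a = b" "s b = a" by (simp_all add: s_def)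
    have so: "s d = d" if "d \<in> Oo" for d using that by (simp add: s_def Oo_def)
    have F2: "X $ (Transposition.transpose c d i) $ (Transposition.transpose c d j) = X $ i $ j"
      if d: "d \<in> Oo" for d i j
    proof -
      have "perm_act (Transposition.transpose c d) X = X"
      proof -
        have "a \<noteq> d" "b \<noteq> d" using d by (auto simp: Oo_def)
        then show ?thesis using eqs[of c d] ac bc by (simp add: X_def)
      qed
      then have "perm_act (Transposition.transpose c d) X $ i $ j = X $ i $ j" by simp
      then show ?thesis by (simp add: perm_act_swap)
    qed
    have Xad: "X$a$d = q" if "d \<in> Oo" for d
      using F2[OF that, of a c] that c by (simp add: q_def Oo_def)
    have Xda: "X$d$a = r" if "d \<in> Oo" for d
      using F2[OF that, of c a] that c by (simp add: r_def Oo_def)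
    have Xba: "X$b$a = -p" using F1[of a b] by (simp add: sa p_def)
    have Xbd: "X$b$d = -q" if "d \<in> Oo" for d using F1[of a d] Xad[OF that] by (simp add: sa so[OF that])
    have Xdb: "X$d$b = -r" if "d \<in> Oo" for d using F1[of d a] Xda[OF that] by (simp add: sa so[OF that])
    have Xbb: "X$b$b = - X$a$a" using F1[of a a] by (simp add: sa)
    have Xoo: "X$i$j = 0" if "i \<in> Oo" "j \<in> Oo" for i j using F1[of i j] by (simp add: so that)
    have F3: "X = perm_act (Transposition.transpose b c) X + perm_act (Transposition.transpose a c) X"
    proof -
      have "X = f (dv a c) + f (dv c b)" unfolding X_def using dv_add[of a b c] linear_add[OF lin] by metis
      then show ?thesis using eqs[of b c] eqs[of a c] ab ac bc by simp
    qed
    have pqr: "p = q - r"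
    proof -
      have "X$a$b = X$a$c + X$c$b"
        using arg_cong[OF F3, of "\<lambda>M. M$a$b"] ab ac bc by (simp add: perm_act_swap)
      moreover have "X$c$b = -r" using Xdb c by (simp add: Oo_def)
      ultimately show ?thesis by (simp add: p_def q_def)
    qed
    have row: "X$a$a + p + (n - 2) * q = 0"
    proof -
      have "(\<Sum>j\<in>Oo. X$a$j) = (\<Sum>j\<in>Oo. q)" using Xad by simp
      then have "(\<Sum>j\<in>Oo. X$a$j) = (n-2) * q" using cO by simp
      then show ?thesis using rs[of a] sum_split3[OF ab, of "\<lambda>j. X$a$j"] by (simp add: Oo_def p_def)
    qed
    have lam: "lam = X$a$a - p + (n - 2) * r"
    proof -
      have "(\<Sum>j\<in>Oo. X$j$a) = (\<Sum>j\<in>Oo. r)" using Xda by simp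
      then have "(\<Sum>j\<in>Oo. X$j$a) = (n-2) * r" using cO by simp
      then show ?thesis using sum_split3[OF ab, of "\<lambda>j. X$j$a"] Xba by (simp add: Oo_def lam_def)
    qed
    have n2: "n > 2" using card by (simp add: n_def)
    have "n * p = (X$a$a + p + (n - 2) * q) - lam - (n - 2) * (q - r - p)"
      unfolding lam by (simp add: algebra_simps)
    then have "n * p = 0" using row True pqr by simp
    then have p0: "p = 0" using n2 by simp
    have rq: "r = q" using pqr p0 by simp
    have Xaa: "X$a$a = -(n-2)*q" using row p0 by (simp add: algebra_simps)
    have XY: "X = q *\<^sub>R Ym a b"
    proof -
      { fix i j
        have "X$i$j = q * Ym a b $ i $ j"
        proof -
          consider "i = a" | "i = b" | "i \<in> Oo" by (auto simp: Oo_def)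
          then show ?thesis
          proof cases
            case 1
            consider "j = a" | "j = b" | "j \<in> Oo" by (auto simp: Oo_def)
            then show ?thesis
              using 1 ab Xaa p0 Xad by cases (auto simp: Ym_def E_def n_def Oo_def p_def algebra_simps)
          next
            case 2
            consider "j = a" | "j = b" | "j \<in> Oo" by (auto simp: Oo_def)
            then show ?thesis
              using 2 ab Xaa Xbb Xba p0 Xbd by cases (auto simp: Ym_def E_def n_def Oo_def algebra_simps)
          next
            case 3
            consider "j = a" | "j = b" | "j \<in> Oo" by (auto simp: Oo_def)
            then show ?thesis
              using 3 ab Xda Xdb rq Xoo by cases (auto simp: Ym_def E_def Oo_def)
          qed
        qed
      }
      then show ?thesis by (simp add: vec_eq_iff)
    qed
    have q0: "q \<noteq> 0"
    proof
      assume "q = 0"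
      then have "f (dv a b) = f 0" using XY by (simp add: X_def linear_0[OF lin])
      moreover have "inj_on f std_module" using bij bij_betw_imp_inj_on by blast
      moreover have "(0::real^'n) \<in> std_module" by (simp add: std_module_def)
      ultimately have "dv a b = 0" using dv_std[of a b] by (metis inj_on_def)
      then show False using dv_nz[OF ab] by simp
    qed
    have "(1/q) *\<^sub>R X \<in> L" by (rule subspace_scale[OF sub XL])
    then have "Ym a b \<in> L" using q0 by (simp add: XY)
    then show ?thesis using Sym_part[OF jor inv J ab] by blast
  qed
qed


theorem mainTheorem14:
  fixes L :: "(real^'n::finite^'n) set"
  assumes "CARD('n) > 2"
    and "L \<subseteq> Lspace"
    and "jordan_algebra L"
    and "Sn_invariant L"
    and "Jmat \<in> L"
    and "contains_std_submodule L"
  shows "let c1 = (EI \<subseteq> L \<and> \<not> Symm \<subseteq> L);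
             c2 = (Symm \<subseteq> L \<and> \<not> EI \<subseteq> L);
             c3 = ({A + B | A B. A \<in> EI \<and> B \<in> Symm} \<subseteq> L)
         in (c1 \<and> \<not> c2 \<and> \<not> c3) \<or> (\<not> c1 \<and> c2 \<and> \<not> c3) \<or> (\<not> c1 \<and> \<not> c2 \<and> c3)"
proof -
  have sub: "subspace L" using assms(3) jordan_algebra_def by blast
  have k: "EI \<subseteq> L \<or> Symm \<subseteq> L" by (rule key[OF assms])
  have z1: "(0::real^'n^'n) \<in> EI" unfolding EI_def by (rule span_zero)
  have z2: "(0::real^'n^'n) \<in> Symm" by (simp add: Symm_def Lspace_def transpose_def vec_eq_iff)
  have c3: "({A + B | A B. A \<in> EI \<and> B \<in> Symm} \<subseteq> L) = (EI \<subseteq> L \<and> Symm \<subseteq> L)"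
  proof
    assume h: "{A + B | A B. A \<in> EI \<and> B \<in> Symm} \<subseteq> L"
    have "EI \<subseteq> L"
    proof
      fix A :: "real^'n^'n" assume "A \<in> EI"
      then have "A + 0 \<in> L" using h z2 by blast
      then show "A \<in> L" by simp
    qed
    moreover have "Symm \<subseteq> L"
    proof
      fix B :: "real^'n^'n" assume "B \<in> Symm"
      then have "0 + B \<in> L" using h z1 by blast
      then show "B \<in> L" by simp
    qed
    ultimately show "EI \<subseteq> L \<and> Symm \<subseteq> L" by blast
  next
    assume "EI \<subseteq> L \<and> Symm \<subseteq> L"
    then show "{A + B | A B. A \<in> EI \<and> B \<in> Symm} \<subseteq> L"
      using sub subspace_add by blast
  qed
  show ?thesis unfolding Let_def c3 using k by blast
qed

end
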